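(* Let $G_1,\dots,G_6$ be the simple graphs on $\{1,\dots,7\}$ whose edges are $12,23,34,45,51,67$ together with, respectively, $G_1$: $61,62,74$; $G_2$: $61,63,72$; $G_3$: $61,63,74$; $G_4$: $61,63,72,74$; $G_5$: $61,72$; $G_6$: $61,73$. Then the Shannon entropy satisfies $H^{*}(G_1)=11/3$ and $H^{*}(G_i)=7/2$ for $i=2,\dots,6$.
   Context: For a simple graph $G=(V,E)$, its Shannon entropy $H^{*}(G)$ is $\sup h(V)$ over all functions $h:2^V\to\mathbb{R}$ satisfying: $h(\{v\})\le1$ for all $v\in V$; $h(S)\le h(T)$ whenever $S\subseteq T\subseteq V$; $h(S\cup T)+h(S\cap T)\le h(S)+h(T)$ for all $S,T\subseteq V$; and $h(N(v)\cup\{v\})=h(N(v))$ for all $v\in V$, where $N(v)$ is the neighbourhood of $v$. *)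

theory Defs
  imports Complex_Main
begin

definition adj :: "'a set set \<Rightarrow> 'a \<Rightarrow> 'a \<Rightarrow> bool" where
  "adj Es u v \<longleftrightarrow> u \<noteq> v \<and> {u, v} \<in> Es"

definition nbhd :: "'a set \<Rightarrow> 'a set set \<Rightarrow> 'a \<Rightarrow> 'a set" where
  "nbhd V Es v = {u \<in> V. adj Es v u}"

definition shannon_feasible :: "'a set \<Rightarrow> 'a set set \<Rightarrow> ('a set \<Rightarrow> real) \<Rightarrow> bool" where
  "shannon_feasible V Es h \<longleftrightarrow>
     h {} = 0 \<and>
     (\<forall>v\<in>V. h {v} \<le> 1) \<and>
     (\<forall>S T. S \<subseteq> T \<and> T \<subseteq> V \<longrightarrow> h S \<le> h T) \<and>
     (\<forall>S T. S \<subseteq> V \<and> T \<subseteq> V \<longrightarrow> h (S \<union> T) + h (S \<inter> T) \<le> h S + h T) \<and>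
     (\<forall>v\<in>V. h (insert v (nbhd V Es v)) = h (nbhd V Es v))"

definition shannon_entropy :: "'a set \<Rightarrow> 'a set set \<Rightarrow> real" where
  "shannon_entropy V Es = Sup ((\<lambda>h. h V) ` {h. shannon_feasible V Es h})"

definition base_edges :: "nat set set" where
  "base_edges = {{1,2},{2,3},{3,4},{4,5},{5,1},{6,7}}"

definition G1 :: "nat set set" where "G1 = base_edges \<union> {{6,1},{6,2},{7,4}}"
definition G2 :: "nat set set" where "G2 = base_edges \<union> {{6,1},{6,3},{7,2}}"
definition G3 :: "nat set set" where "G3 = base_edges \<union> {{6,1},{6,3},{7,4}}"
definition G4 :: "nat set set" where "G4 = base_edges \<union> {{6,1},{6,3},{7,2},{7,4}}"
definition G5 :: "nat set set" where "G5 = base_edges \<union> {{6,1},{7,2}}"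
definition G6 :: "nat set set" where "G6 = base_edges \<union> {{6,1},{7,3}}"

end

theory Submission
  imports Defs
begin

lemma sub_inst: assumes "shannon_feasible V Es h" "S \<subseteq> V" "T \<subseteq> V" "S \<union> T = U" "S \<inter> T = I"
  shows "h U + h I \<le> h S + h T"
proof -
  have "\<forall>S T. S \<subseteq> V \<and> T \<subseteq> V \<longrightarrow> h (S \<union> T) + h (S \<inter> T) \<le> h S + h T"
    using assms(1) unfolding shannon_feasible_def by (elim conjE) assumption
  then have "h (S \<union> T) + h (S \<inter> T) \<le> h S + h T" using assms(2,3) by simp
  then show ?thesis using assms(4,5) by simp
qed
lemma sing_inst: assumes "shannon_feasible V Es h" "v \<in> V" shows "h {v} \<le> 1"
proof -
  have "\<forall>v\<in>V. h {v} \<le> 1"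
    using assms(1) unfolding shannon_feasible_def by (elim conjE) assumption
  then show ?thesis using assms(2) by simp
qed
lemma mono_inst: assumes "shannon_feasible V Es h" "S \<subseteq> T" "T \<subseteq> V" shows "h S \<le> h T"
proof -
  have "\<forall>S T. S \<subseteq> T \<and> T \<subseteq> V \<longrightarrow> h S \<le> h T"
    using assms(1) unfolding shannon_feasible_def by (elim conjE) assumption
  then show ?thesis using assms(2,3) by simp
qed
lemma clos_inst: assumes "shannon_feasible V Es h" "v \<in> V" "nbhd V Es v = N" "insert v N = M" shows "h M = h N"
proof -
  have "\<forall>v\<in>V. h (insert v (nbhd V Es v)) = h (nbhd V Es v)"
    using assms(1) unfolding shannon_feasible_def by (elim conjE) assumption
  then have "h (insert v (nbhd V Es v)) = h (nbhd V Es v)" using assms(2) by blast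
  then show ?thesis using assms(3,4) by simp
qed

lemma V7: "{1..7::nat} = {1,2,3,4,5,6,7}" by auto

lemma nbhd_G1_1: "nbhd {1..7} G1 1 = {2,5,6}"
  by (auto simp: nbhd_def adj_def G1_def base_edges_def doubleton_eq_iff)
lemma nbhd_G1_2: "nbhd {1..7} G1 2 = {1,3,6}"
  by (auto simp: nbhd_def adj_def G1_def base_edges_def doubleton_eq_iff)
lemma nbhd_G1_3: "nbhd {1..7} G1 3 = {2,4}"
  by (auto simp: nbhd_def adj_def G1_def base_edges_def doubleton_eq_iff)
lemma nbhd_G1_4: "nbhd {1..7} G1 4 = {3,5,7}"
  by (auto simp: nbhd_def adj_def G1_def base_edges_def doubleton_eq_iff)
lemma nbhd_G1_5: "nbhd {1..7} G1 5 = {1,4}"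
  by (auto simp: nbhd_def adj_def G1_def base_edges_def doubleton_eq_iff)
lemma nbhd_G1_6: "nbhd {1..7} G1 6 = {1,2,7}"
  by (auto simp: nbhd_def adj_def G1_def base_edges_def doubleton_eq_iff)
lemma nbhd_G1_7: "nbhd {1..7} G1 7 = {4,6}"
  by (auto simp: nbhd_def adj_def G1_def base_edges_def doubleton_eq_iff)
lemmas nbhd_G1 = nbhd_G1_1 nbhd_G1_2 nbhd_G1_3 nbhd_G1_4 nbhd_G1_5 nbhd_G1_6 nbhd_G1_7

lemma nbhd_G2_1: "nbhd {1..7} G2 1 = {2,5,6}"
  by (auto simp: nbhd_def adj_def G2_def base_edges_def doubleton_eq_iff)
lemma nbhd_G2_2: "nbhd {1..7} G2 2 = {1,3,7}"
  by (auto simp: nbhd_def adj_def G2_def base_edges_def doubleton_eq_iff)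
lemma nbhd_G2_3: "nbhd {1..7} G2 3 = {2,4,6}"
  by (auto simp: nbhd_def adj_def G2_def base_edges_def doubleton_eq_iff)
lemma nbhd_G2_4: "nbhd {1..7} G2 4 = {3,5}"
  by (auto simp: nbhd_def adj_def G2_def base_edges_def doubleton_eq_iff)
lemma nbhd_G2_5: "nbhd {1..7} G2 5 = {1,4}"
  by (auto simp: nbhd_def adj_def G2_def base_edges_def doubleton_eq_iff)
lemma nbhd_G2_6: "nbhd {1..7} G2 6 = {1,3,7}"
  by (auto simp: nbhd_def adj_def G2_def base_edges_def doubleton_eq_iff)
lemma nbhd_G2_7: "nbhd {1..7} G2 7 = {2,6}"
  by (auto simp: nbhd_def adj_def G2_def base_edges_def doubleton_eq_iff)
lemmas nbhd_G2 = nbhd_G2_1 nbhd_G2_2 nbhd_G2_3 nbhd_G2_4 nbhd_G2_5 nbhd_G2_6 nbhd_G2_7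

lemma nbhd_G3_1: "nbhd {1..7} G3 1 = {2,5,6}"
  by (auto simp: nbhd_def adj_def G3_def base_edges_def doubleton_eq_iff)
lemma nbhd_G3_2: "nbhd {1..7} G3 2 = {1,3}"
  by (auto simp: nbhd_def adj_def G3_def base_edges_def doubleton_eq_iff)
lemma nbhd_G3_3: "nbhd {1..7} G3 3 = {2,4,6}"
  by (auto simp: nbhd_def adj_def G3_def base_edges_def doubleton_eq_iff)
lemma nbhd_G3_4: "nbhd {1..7} G3 4 = {3,5,7}"
  by (auto simp: nbhd_def adj_def G3_def base_edges_def doubleton_eq_iff)
lemma nbhd_G3_5: "nbhd {1..7} G3 5 = {1,4}"
  by (auto simp: nbhd_def adj_def G3_def base_edges_def doubleton_eq_iff)
lemma nbhd_G3_6: "nbhd {1..7} G3 6 = {1,3,7}"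
  by (auto simp: nbhd_def adj_def G3_def base_edges_def doubleton_eq_iff)
lemma nbhd_G3_7: "nbhd {1..7} G3 7 = {4,6}"
  by (auto simp: nbhd_def adj_def G3_def base_edges_def doubleton_eq_iff)
lemmas nbhd_G3 = nbhd_G3_1 nbhd_G3_2 nbhd_G3_3 nbhd_G3_4 nbhd_G3_5 nbhd_G3_6 nbhd_G3_7

lemma nbhd_G4_1: "nbhd {1..7} G4 1 = {2,5,6}"
  by (auto simp: nbhd_def adj_def G4_def base_edges_def doubleton_eq_iff)
lemma nbhd_G4_2: "nbhd {1..7} G4 2 = {1,3,7}"
  by (auto simp: nbhd_def adj_def G4_def base_edges_def doubleton_eq_iff)
lemma nbhd_G4_3: "nbhd {1..7} G4 3 = {2,4,6}"
  by (auto simp: nbhd_def adj_def G4_def base_edges_def doubleton_eq_iff)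
lemma nbhd_G4_4: "nbhd {1..7} G4 4 = {3,5,7}"
  by (auto simp: nbhd_def adj_def G4_def base_edges_def doubleton_eq_iff)
lemma nbhd_G4_5: "nbhd {1..7} G4 5 = {1,4}"
  by (auto simp: nbhd_def adj_def G4_def base_edges_def doubleton_eq_iff)
lemma nbhd_G4_6: "nbhd {1..7} G4 6 = {1,3,7}"
  by (auto simp: nbhd_def adj_def G4_def base_edges_def doubleton_eq_iff)
lemma nbhd_G4_7: "nbhd {1..7} G4 7 = {2,4,6}"
  by (auto simp: nbhd_def adj_def G4_def base_edges_def doubleton_eq_iff)
lemmas nbhd_G4 = nbhd_G4_1 nbhd_G4_2 nbhd_G4_3 nbhd_G4_4 nbhd_G4_5 nbhd_G4_6 nbhd_G4_7

lemma nbhd_G5_1: "nbhd {1..7} G5 1 = {2,5,6}"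
  by (auto simp: nbhd_def adj_def G5_def base_edges_def doubleton_eq_iff)
lemma nbhd_G5_2: "nbhd {1..7} G5 2 = {1,3,7}"
  by (auto simp: nbhd_def adj_def G5_def base_edges_def doubleton_eq_iff)
lemma nbhd_G5_3: "nbhd {1..7} G5 3 = {2,4}"
  by (auto simp: nbhd_def adj_def G5_def base_edges_def doubleton_eq_iff)
lemma nbhd_G5_4: "nbhd {1..7} G5 4 = {3,5}"
  by (auto simp: nbhd_def adj_def G5_def base_edges_def doubleton_eq_iff)
lemma nbhd_G5_5: "nbhd {1..7} G5 5 = {1,4}"
  by (auto simp: nbhd_def adj_def G5_def base_edges_def doubleton_eq_iff)
lemma nbhd_G5_6: "nbhd {1..7} G5 6 = {1,7}"
  by (auto simp: nbhd_def adj_def G5_def base_edges_def doubleton_eq_iff)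
lemma nbhd_G5_7: "nbhd {1..7} G5 7 = {2,6}"
  by (auto simp: nbhd_def adj_def G5_def base_edges_def doubleton_eq_iff)
lemmas nbhd_G5 = nbhd_G5_1 nbhd_G5_2 nbhd_G5_3 nbhd_G5_4 nbhd_G5_5 nbhd_G5_6 nbhd_G5_7

lemma nbhd_G6_1: "nbhd {1..7} G6 1 = {2,5,6}"
  by (auto simp: nbhd_def adj_def G6_def base_edges_def doubleton_eq_iff)
lemma nbhd_G6_2: "nbhd {1..7} G6 2 = {1,3}"
  by (auto simp: nbhd_def adj_def G6_def base_edges_def doubleton_eq_iff)
lemma nbhd_G6_3: "nbhd {1..7} G6 3 = {2,4,7}"
  by (auto simp: nbhd_def adj_def G6_def base_edges_def doubleton_eq_iff)
lemma nbhd_G6_4: "nbhd {1..7} G6 4 = {3,5}"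
  by (auto simp: nbhd_def adj_def G6_def base_edges_def doubleton_eq_iff)
lemma nbhd_G6_5: "nbhd {1..7} G6 5 = {1,4}"
  by (auto simp: nbhd_def adj_def G6_def base_edges_def doubleton_eq_iff)
lemma nbhd_G6_6: "nbhd {1..7} G6 6 = {1,7}"
  by (auto simp: nbhd_def adj_def G6_def base_edges_def doubleton_eq_iff)
lemma nbhd_G6_7: "nbhd {1..7} G6 7 = {3,6}"
  by (auto simp: nbhd_def adj_def G6_def base_edges_def doubleton_eq_iff)
lemmas nbhd_G6 = nbhd_G6_1 nbhd_G6_2 nbhd_G6_3 nbhd_G6_4 nbhd_G6_5 nbhd_G6_6 nbhd_G6_7

lemma ub_G1: assumes f: "shannon_feasible {1..7::nat} G1 h" shows "h {1..7} \<le> 11/3"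
proof -
  have e: "h {} = 0" using f by (simp add: shannon_feasible_def)
  have c0: "h {1,2,4,5} + h {4,5} \<le> h {1,4,5} + h {2,4,5}" by (rule sub_inst[OF f]) auto
  have c1: "h {1,3,6} + h {6} \<le> h {1,6} + h {3,6}" by (rule sub_inst[OF f]) auto
  have c2: "h {1,2,3,4} + h {2,4} \<le> h {1,2,4} + h {2,3,4}" by (rule sub_inst[OF f]) auto
  have c3: "h {1,2,3,5,6} + h {2,5,6} \<le> h {1,2,5,6} + h {2,3,5,6}" by (rule sub_inst[OF f]) auto
  have c4: "h {1,4,7} + h {7} \<le> h {1,7} + h {4,7}" by (rule sub_inst[OF f]) auto
  have c5: "h {1,2,3,4,6} + h {2,3,6} \<le> h {1,2,3,6} + h {2,3,4,6}" by (rule sub_inst[OF f]) auto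
  have c6: "h {1,2,3,4,5,6} + h {2,3,5,6} \<le> h {1,2,3,5,6} + h {2,3,4,5,6}" by (rule sub_inst[OF f]) auto
  have c7: "h {1,6} + h {} \<le> h {1} + h {6}" by (rule sub_inst[OF f]) auto
  have c8: "h {1,7} + h {} \<le> h {1} + h {7}" by (rule sub_inst[OF f]) auto
  have c9: "h {1,4,6,7} + h {4,6} \<le> h {1,4,6} + h {4,6,7}" by (rule sub_inst[OF f]) auto
  have c10: "h {1,3,4,5,6,7} + h {3,4,5,6} \<le> h {1,3,4,5,6} + h {3,4,5,6,7}" by (rule sub_inst[OF f]) auto
  have c11: "h {2,4} + h {} \<le> h {2} + h {4}" by (rule sub_inst[OF f]) auto
  have c12: "h {2,4,5} + h {5} \<le> h {2,5} + h {4,5}" by (rule sub_inst[OF f]) auto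
  have c13: "h {2,3,4,6} + h {3,6} \<le> h {2,3,6} + h {3,4,6}" by (rule sub_inst[OF f]) auto
  have c14: "h {2,5} + h {} \<le> h {2} + h {5}" by (rule sub_inst[OF f]) auto
  have c15: "h {2,3,4,5,6} + h {3,4,6} \<le> h {2,3,4,6} + h {3,4,5,6}" by (rule sub_inst[OF f]) auto
  have c16: "h {1,2,3,4,5,6} + h {1,3,4,6} \<le> h {1,2,3,4,6} + h {1,3,4,5,6}" by (rule sub_inst[OF f]) auto
  have c17: "h {2,6} + h {} \<le> h {2} + h {6}" by (rule sub_inst[OF f]) auto
  have c18: "h {1,2,4,5,7} + h {1,4,5} \<le> h {1,2,4,5} + h {1,4,5,7}" by (rule sub_inst[OF f]) auto
  have c19: "h {1,2,3,4,5,6,7} + h {1,3,4,5,6} \<le> h {1,2,3,4,5,6} + h {1,3,4,5,6,7}" by (rule sub_inst[OF f]) auto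
  have c20: "h {3,5} + h {} \<le> h {3} + h {5}" by (rule sub_inst[OF f]) auto
  have c21: "h {1,2,3,4,5} + h {1,2,4} \<le> h {1,2,3,4} + h {1,2,4,5}" by (rule sub_inst[OF f]) auto
  have c22: "h {1,3,4,5,6,7} + h {1,4,6,7} \<le> h {1,3,4,6,7} + h {1,4,5,6,7}" by (rule sub_inst[OF f]) auto
  have c23: "h {2,3,4,6} + h {2,4} \<le> h {2,3,4} + h {2,4,6}" by (rule sub_inst[OF f]) auto
  have c24: "h {3,4,5,6,7} + h {4,5,7} \<le> h {3,4,5,7} + h {4,5,6,7}" by (rule sub_inst[OF f]) auto
  have c25: "h {1,2,3,4,5,6,7} + h {1,2,4,5,7} \<le> h {1,2,3,4,5,7} + h {1,2,4,5,6,7}" by (rule sub_inst[OF f]) auto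
  have c26: "h {3,5,7} + h {5} \<le> h {3,5} + h {5,7}" by (rule sub_inst[OF f]) auto
  have c27: "h {1,3,4,6,7} + h {1,4,6} \<le> h {1,3,4,6} + h {1,4,6,7}" by (rule sub_inst[OF f]) auto
  have c28: "h {1,2,3,4,5,7} + h {1,2,4,5} \<le> h {1,2,3,4,5} + h {1,2,4,5,7}" by (rule sub_inst[OF f]) auto
  have c29: "h {4,6} + h {} \<le> h {4} + h {6}" by (rule sub_inst[OF f]) auto
  have c30: "h {2,4,6} + h {2} \<le> h {2,4} + h {2,6}" by (rule sub_inst[OF f]) auto
  have c31: "h {1,2,4,5,6,7} + h {1,2,5,7} \<le> h {1,2,4,5,7} + h {1,2,5,6,7}" by (rule sub_inst[OF f]) auto
  have c32: "h {4,5,6,7} + h {4,7} \<le> h {4,5,7} + h {4,6,7}" by (rule sub_inst[OF f]) auto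
  have c33: "h {1,2,5,6,7} + h {1,2,7} \<le> h {1,2,5,7} + h {1,2,6,7}" by (rule sub_inst[OF f]) auto
  have c34: "h {1,4,5,6,7} + h {1,4,7} \<le> h {1,4,5,7} + h {1,4,6,7}" by (rule sub_inst[OF f]) auto
  have c35: "h {5,7} + h {} \<le> h {5} + h {7}" by (rule sub_inst[OF f]) auto
  have c36: "h {1,4,5,7} + h {1,4} \<le> h {1,4,5} + h {1,4,7}" by (rule sub_inst[OF f]) auto
  have c37: "h {1} \<le> 1" by (rule sing_inst[OF f]) auto
  have c38: "h {2} \<le> 1" by (rule sing_inst[OF f]) auto
  have c39: "h {3} \<le> 1" by (rule sing_inst[OF f]) auto
  have c40: "h {4} \<le> 1" by (rule sing_inst[OF f]) auto
  have c41: "h {5} \<le> 1" by (rule sing_inst[OF f]) auto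
  have c42: "h {6} \<le> 1" by (rule sing_inst[OF f]) auto
  have c43: "h {7} \<le> 1" by (rule sing_inst[OF f]) auto
  have c44: "h {1,2,5,6} = h {2,5,6}" by (rule clos_inst[OF f _ nbhd_G1_1]) auto
  have c45: "h {1,2,3,6} = h {1,3,6}" by (rule clos_inst[OF f _ nbhd_G1_2]) auto
  have c46: "h {2,3,4} = h {2,4}" by (rule clos_inst[OF f _ nbhd_G1_3]) auto
  have c47: "h {3,4,5,7} = h {3,5,7}" by (rule clos_inst[OF f _ nbhd_G1_4]) auto
  have c48: "h {1,4,5} = h {1,4}" by (rule clos_inst[OF f _ nbhd_G1_5]) auto
  have c49: "h {1,2,6,7} = h {1,2,7}" by (rule clos_inst[OF f _ nbhd_G1_6]) auto
  have c50: "h {4,6,7} = h {4,6}" by (rule clos_inst[OF f _ nbhd_G1_7]) auto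
  show ?thesis unfolding V7 using e c0 c1 c2 c3 c4 c5 c6 c7 c8 c9 c10 c11 c12 c13 c14 c15 c16 c17 c18 c19 c20 c21 c22 c23 c24 c25 c26 c27 c28 c29 c30 c31 c32 c33 c34 c35 c36 c37 c38 c39 c40 c41 c42 c43 c44 c45 c46 c47 c48 c49 c50 by linarith
qed

lemma ub_G2: assumes f: "shannon_feasible {1..7::nat} G2 h" shows "h {1..7} \<le> 7/2"
proof -
  have e: "h {} = 0" using f by (simp add: shannon_feasible_def)
  have c0: "h {1,3,4,5,6,7} \<le> h {1,2,3,4,5,6,7}" by (rule mono_inst[OF f]) auto
  have c1: "h {1,3} + h {} \<le> h {1} + h {3}" by (rule sub_inst[OF f]) auto
  have c2: "h {1,2,3,4,6,7} + h {2,4,6,7} \<le> h {1,2,4,6,7} + h {2,3,4,6,7}" by (rule sub_inst[OF f]) auto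
  have c3: "h {1,2,4} + h {2} \<le> h {1,2} + h {2,4}" by (rule sub_inst[OF f]) auto
  have c4: "h {1,2,3,4,5,7} + h {2,3,5,7} \<le> h {1,2,3,5,7} + h {2,3,4,5,7}" by (rule sub_inst[OF f]) auto
  have c5: "h {1,7} + h {} \<le> h {1} + h {7}" by (rule sub_inst[OF f]) auto
  have c6: "h {1,2,5,6,7} + h {2,5,6} \<le> h {1,2,5,6} + h {2,5,6,7}" by (rule sub_inst[OF f]) auto
  have c7: "h {2,4} + h {} \<le> h {2} + h {4}" by (rule sub_inst[OF f]) auto
  have c8: "h {2,3,4,5} + h {3,5} \<le> h {2,3,5} + h {3,4,5}" by (rule sub_inst[OF f]) auto
  have c9: "h {1,2,3,4,5,6,7} + h {1,3,5,6,7} \<le> h {1,2,3,5,6,7} + h {1,3,4,5,6,7}" by (rule sub_inst[OF f]) auto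
  have c10: "h {2,5} + h {} \<le> h {2} + h {5}" by (rule sub_inst[OF f]) auto
  have c11: "h {1,2,4,5} + h {1,4} \<le> h {1,2,4} + h {1,4,5}" by (rule sub_inst[OF f]) auto
  have c12: "h {1,2,3,5,7} + h {1,3,7} \<le> h {1,2,3,7} + h {1,3,5,7}" by (rule sub_inst[OF f]) auto
  have c13: "h {2,6} + h {} \<le> h {2} + h {6}" by (rule sub_inst[OF f]) auto
  have c14: "h {1,2,3,6,7} + h {1,3,7} \<le> h {1,2,3,7} + h {1,3,6,7}" by (rule sub_inst[OF f]) auto
  have c15: "h {1,2,3,4,5,6,7} + h {1,3,4,5,7} \<le> h {1,2,3,4,5,7} + h {1,3,4,5,6,7}" by (rule sub_inst[OF f]) auto
  have c16: "h {1,2,3,5,6,7} + h {1,2,6,7} \<le> h {1,2,3,6,7} + h {1,2,5,6,7}" by (rule sub_inst[OF f]) auto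
  have c17: "h {1,2,3,4,5,6,7} + h {1,2,4,6,7} \<le> h {1,2,3,4,6,7} + h {1,2,4,5,6,7}" by (rule sub_inst[OF f]) auto
  have c18: "h {1,3,7} + h {1} \<le> h {1,3} + h {1,7}" by (rule sub_inst[OF f]) auto
  have c19: "h {2,3,4,6,7} + h {2,4,6} \<le> h {2,3,4,6} + h {2,4,6,7}" by (rule sub_inst[OF f]) auto
  have c20: "h {1,2,4,5,6,7} + h {1,2,5,7} \<le> h {1,2,4,5,7} + h {1,2,5,6,7}" by (rule sub_inst[OF f]) auto
  have c21: "h {1,3,4,5,6,7} + h {1,3,5,7} \<le> h {1,3,4,5,7} + h {1,3,5,6,7}" by (rule sub_inst[OF f]) auto
  have c22: "h {1,2,4,5,7} + h {1,2,5} \<le> h {1,2,4,5} + h {1,2,5,7}" by (rule sub_inst[OF f]) auto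
  have c23: "h {2,3,4,5,7} + h {2,3,5} \<le> h {2,3,4,5} + h {2,3,5,7}" by (rule sub_inst[OF f]) auto
  have c24: "h {2,5,6,7} + h {2,7} \<le> h {2,5,7} + h {2,6,7}" by (rule sub_inst[OF f]) auto
  have c25: "h {1,2,5,6,7} + h {1,2,7} \<le> h {1,2,5,7} + h {1,2,6,7}" by (rule sub_inst[OF f]) auto
  have c26: "h {2,5,7} + h {2} \<le> h {2,5} + h {2,7}" by (rule sub_inst[OF f]) auto
  have c27: "h {1,2,5,7} + h {1,2} \<le> h {1,2,5} + h {1,2,7}" by (rule sub_inst[OF f]) auto
  have c28: "h {1} \<le> 1" by (rule sing_inst[OF f]) auto
  have c29: "h {2} \<le> 1" by (rule sing_inst[OF f]) auto
  have c30: "h {3} \<le> 1" by (rule sing_inst[OF f]) auto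
  have c31: "h {4} \<le> 1" by (rule sing_inst[OF f]) auto
  have c32: "h {5} \<le> 1" by (rule sing_inst[OF f]) auto
  have c33: "h {6} \<le> 1" by (rule sing_inst[OF f]) auto
  have c34: "h {7} \<le> 1" by (rule sing_inst[OF f]) auto
  have c35: "h {1,2,5,6} = h {2,5,6}" by (rule clos_inst[OF f _ nbhd_G2_1]) auto
  have c36: "h {1,2,3,7} = h {1,3,7}" by (rule clos_inst[OF f _ nbhd_G2_2]) auto
  have c37: "h {2,3,4,6} = h {2,4,6}" by (rule clos_inst[OF f _ nbhd_G2_3]) auto
  have c38: "h {3,4,5} = h {3,5}" by (rule clos_inst[OF f _ nbhd_G2_4]) auto
  have c39: "h {1,4,5} = h {1,4}" by (rule clos_inst[OF f _ nbhd_G2_5]) auto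
  have c40: "h {1,3,6,7} = h {1,3,7}" by (rule clos_inst[OF f _ nbhd_G2_6]) auto
  have c41: "h {2,6,7} = h {2,6}" by (rule clos_inst[OF f _ nbhd_G2_7]) auto
  show ?thesis unfolding V7 using e c0 c1 c2 c3 c4 c5 c6 c7 c8 c9 c10 c11 c12 c13 c14 c15 c16 c17 c18 c19 c20 c21 c22 c23 c24 c25 c26 c27 c28 c29 c30 c31 c32 c33 c34 c35 c36 c37 c38 c39 c40 c41 by linarith
qed

lemma ub_G3: assumes f: "shannon_feasible {1..7::nat} G3 h" shows "h {1..7} \<le> 7/2"
proof -
  have e: "h {} = 0" using f by (simp add: shannon_feasible_def)
  have c0: "h {2,3,4,5,6,7} \<le> h {1,2,3,4,5,6,7}" by (rule mono_inst[OF f]) auto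
  have c1: "h {1,2,3,5,6,7} \<le> h {1,2,3,4,5,6,7}" by (rule mono_inst[OF f]) auto
  have c2: "h {1,2,3,4,6} + h {2,4,6} \<le> h {1,2,4,6} + h {2,3,4,6}" by (rule sub_inst[OF f]) auto
  have c3: "h {1,3,4,5,7} + h {4,5,7} \<le> h {1,4,5,7} + h {3,4,5,7}" by (rule sub_inst[OF f]) auto
  have c4: "h {1,2,3,4,5,6,7} + h {2,4,5,6,7} \<le> h {1,2,4,5,6,7} + h {2,3,4,5,6,7}" by (rule sub_inst[OF f]) auto
  have c5: "h {1,4} + h {} \<le> h {1} + h {4}" by (rule sub_inst[OF f]) auto
  have c6: "h {1,2,4,5,6} + h {2,5,6} \<le> h {1,2,5,6} + h {2,4,5,6}" by (rule sub_inst[OF f]) auto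
  have c7: "h {1,4,5,6,7} + h {5,6,7} \<le> h {1,5,6,7} + h {4,5,6,7}" by (rule sub_inst[OF f]) auto
  have c8: "h {1,2,3,4,5,7} + h {2,3,5,7} \<le> h {1,2,3,5,7} + h {2,3,4,5,7}" by (rule sub_inst[OF f]) auto
  have c9: "h {1,4,7} + h {4} \<le> h {1,4} + h {4,7}" by (rule sub_inst[OF f]) auto
  have c10: "h {1,5,6,7} + h {5,6} \<le> h {1,5,6} + h {5,6,7}" by (rule sub_inst[OF f]) auto
  have c11: "h {1,2,3,4,5,6,7} + h {2,3,4,5,6} \<le> h {1,2,3,4,5,6} + h {2,3,4,5,6,7}" by (rule sub_inst[OF f]) auto
  have c12: "h {1,2,4,5,6} + h {1,5,6} \<le> h {1,2,5,6} + h {1,4,5,6}" by (rule sub_inst[OF f]) auto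
  have c13: "h {2,3,4,5,7} + h {3,5,7} \<le> h {2,3,5,7} + h {3,4,5,7}" by (rule sub_inst[OF f]) auto
  have c14: "h {1,2,3,4,5,6,7} + h {1,3,5,6,7} \<le> h {1,2,3,5,6,7} + h {1,3,4,5,6,7}" by (rule sub_inst[OF f]) auto
  have c15: "h {2,5} + h {} \<le> h {2} + h {5}" by (rule sub_inst[OF f]) auto
  have c16: "h {1,2,3,5} + h {1,3} \<le> h {1,2,3} + h {1,3,5}" by (rule sub_inst[OF f]) auto
  have c17: "h {2,5,6} + h {5} \<le> h {2,5} + h {5,6}" by (rule sub_inst[OF f]) auto
  have c18: "h {1,2,3,4,5,6,7} + h {1,3,4,5,7} \<le> h {1,2,3,4,5,7} + h {1,3,4,5,6,7}" by (rule sub_inst[OF f]) auto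
  have c19: "h {1,2,3,5,7} + h {1,3,5} \<le> h {1,2,3,5} + h {1,3,5,7}" by (rule sub_inst[OF f]) auto
  have c20: "h {1,2,4,5,6,7} + h {1,4,5,6} \<le> h {1,2,4,5,6} + h {1,4,5,6,7}" by (rule sub_inst[OF f]) auto
  have c21: "h {3,5} + h {} \<le> h {3} + h {5}" by (rule sub_inst[OF f]) auto
  have c22: "h {1,2,3,4,5,6} + h {1,2,4,6} \<le> h {1,2,3,4,6} + h {1,2,4,5,6}" by (rule sub_inst[OF f]) auto
  have c23: "h {3,5,7} + h {5} \<le> h {3,5} + h {5,7}" by (rule sub_inst[OF f]) auto
  have c24: "h {2,3,4,5,6,7} + h {2,4,5,6} \<le> h {2,3,4,5,6} + h {2,4,5,6,7}" by (rule sub_inst[OF f]) auto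
  have c25: "h {4,6} + h {} \<le> h {4} + h {6}" by (rule sub_inst[OF f]) auto
  have c26: "h {1,3,4,5,6,7} + h {1,3,5,7} \<le> h {1,3,4,5,7} + h {1,3,5,6,7}" by (rule sub_inst[OF f]) auto
  have c27: "h {4,5,6,7} + h {4,7} \<le> h {4,5,7} + h {4,6,7}" by (rule sub_inst[OF f]) auto
  have c28: "h {1,3,5,6,7} + h {1,3,7} \<le> h {1,3,5,7} + h {1,3,6,7}" by (rule sub_inst[OF f]) auto
  have c29: "h {5,7} + h {} \<le> h {5} + h {7}" by (rule sub_inst[OF f]) auto
  have c30: "h {1,4,5,7} + h {1,4} \<le> h {1,4,5} + h {1,4,7}" by (rule sub_inst[OF f]) auto
  have c31: "h {1} \<le> 1" by (rule sing_inst[OF f]) auto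
  have c32: "h {2} \<le> 1" by (rule sing_inst[OF f]) auto
  have c33: "h {3} \<le> 1" by (rule sing_inst[OF f]) auto
  have c34: "h {4} \<le> 1" by (rule sing_inst[OF f]) auto
  have c35: "h {5} \<le> 1" by (rule sing_inst[OF f]) auto
  have c36: "h {6} \<le> 1" by (rule sing_inst[OF f]) auto
  have c37: "h {7} \<le> 1" by (rule sing_inst[OF f]) auto
  have c38: "h {1,2,5,6} = h {2,5,6}" by (rule clos_inst[OF f _ nbhd_G3_1]) auto
  have c39: "h {1,2,3} = h {1,3}" by (rule clos_inst[OF f _ nbhd_G3_2]) auto
  have c40: "h {2,3,4,6} = h {2,4,6}" by (rule clos_inst[OF f _ nbhd_G3_3]) auto
  have c41: "h {3,4,5,7} = h {3,5,7}" by (rule clos_inst[OF f _ nbhd_G3_4]) auto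
  have c42: "h {1,4,5} = h {1,4}" by (rule clos_inst[OF f _ nbhd_G3_5]) auto
  have c43: "h {1,3,6,7} = h {1,3,7}" by (rule clos_inst[OF f _ nbhd_G3_6]) auto
  have c44: "h {4,6,7} = h {4,6}" by (rule clos_inst[OF f _ nbhd_G3_7]) auto
  show ?thesis unfolding V7 using e c0 c1 c2 c3 c4 c5 c6 c7 c8 c9 c10 c11 c12 c13 c14 c15 c16 c17 c18 c19 c20 c21 c22 c23 c24 c25 c26 c27 c28 c29 c30 c31 c32 c33 c34 c35 c36 c37 c38 c39 c40 c41 c42 c43 c44 by linarith
qed

lemma ub_G4: assumes f: "shannon_feasible {1..7::nat} G4 h" shows "h {1..7} \<le> 7/2"
proof -
  have e: "h {} = 0" using f by (simp add: shannon_feasible_def)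
  have c0: "h {1,3,7} + h {7} \<le> h {1,7} + h {3,7}" by (rule sub_inst[OF f]) auto
  have c1: "h {1,2,3,5,6,7} + h {2,5,6,7} \<le> h {1,2,5,6,7} + h {2,3,5,6,7}" by (rule sub_inst[OF f]) auto
  have c2: "h {1,3,4,5,7} + h {3,5,7} \<le> h {1,3,5,7} + h {3,4,5,7}" by (rule sub_inst[OF f]) auto
  have c3: "h {1,2,3,4,6,7} + h {2,3,6,7} \<le> h {1,2,3,6,7} + h {2,3,4,6,7}" by (rule sub_inst[OF f]) auto
  have c4: "h {1,7} + h {} \<le> h {1} + h {7}" by (rule sub_inst[OF f]) auto
  have c5: "h {1,2,5,6,7} + h {2,5,6} \<le> h {1,2,5,6} + h {2,5,6,7}" by (rule sub_inst[OF f]) auto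
  have c6: "h {2,4,6} + h {6} \<le> h {2,6} + h {4,6}" by (rule sub_inst[OF f]) auto
  have c7: "h {1,2,3,4,5,6,7} + h {1,3,5,6,7} \<le> h {1,2,3,5,6,7} + h {1,3,4,5,6,7}" by (rule sub_inst[OF f]) auto
  have c8: "h {2,3,5} + h {3} \<le> h {2,3} + h {3,5}" by (rule sub_inst[OF f]) auto
  have c9: "h {1,2,4,5,6,7} + h {1,4,6,7} \<le> h {1,2,4,6,7} + h {1,4,5,6,7}" by (rule sub_inst[OF f]) auto
  have c10: "h {2,6} + h {} \<le> h {2} + h {6}" by (rule sub_inst[OF f]) auto
  have c11: "h {1,2,3,6,7} + h {1,3,7} \<le> h {1,2,3,7} + h {1,3,6,7}" by (rule sub_inst[OF f]) auto
  have c12: "h {3,5} + h {} \<le> h {3} + h {5}" by (rule sub_inst[OF f]) auto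
  have c13: "h {1,2,3,4,5,6,7} + h {1,2,4,6,7} \<le> h {1,2,3,4,6,7} + h {1,2,4,5,6,7}" by (rule sub_inst[OF f]) auto
  have c14: "h {3,7} + h {} \<le> h {3} + h {7}" by (rule sub_inst[OF f]) auto
  have c15: "h {2,3,4,6,7} + h {2,4,6} \<le> h {2,3,4,6} + h {2,4,6,7}" by (rule sub_inst[OF f]) auto
  have c16: "h {4,6} + h {} \<le> h {4} + h {6}" by (rule sub_inst[OF f]) auto
  have c17: "h {1,3,4,5,6,7} + h {1,3,5,7} \<le> h {1,3,4,5,7} + h {1,3,5,6,7}" by (rule sub_inst[OF f]) auto
  have c18: "h {1,4,5,6,7} + h {1,4,7} \<le> h {1,4,5,7} + h {1,4,6,7}" by (rule sub_inst[OF f]) auto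
  have c19: "h {2,3,5,6,7} + h {2,3,7} \<le> h {2,3,5,7} + h {2,3,6,7}" by (rule sub_inst[OF f]) auto
  have c20: "h {1,4,5,7} + h {1,4} \<le> h {1,4,5} + h {1,4,7}" by (rule sub_inst[OF f]) auto
  have c21: "h {2,3,5,7} + h {2,3} \<le> h {2,3,5} + h {2,3,7}" by (rule sub_inst[OF f]) auto
  have c22: "h {1} \<le> 1" by (rule sing_inst[OF f]) auto
  have c23: "h {2} \<le> 1" by (rule sing_inst[OF f]) auto
  have c24: "h {3} \<le> 1" by (rule sing_inst[OF f]) auto
  have c25: "h {4} \<le> 1" by (rule sing_inst[OF f]) auto
  have c26: "h {5} \<le> 1" by (rule sing_inst[OF f]) auto
  have c27: "h {6} \<le> 1" by (rule sing_inst[OF f]) auto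
  have c28: "h {7} \<le> 1" by (rule sing_inst[OF f]) auto
  have c29: "h {1,2,5,6} = h {2,5,6}" by (rule clos_inst[OF f _ nbhd_G4_1]) auto
  have c30: "h {1,2,3,7} = h {1,3,7}" by (rule clos_inst[OF f _ nbhd_G4_2]) auto
  have c31: "h {2,3,4,6} = h {2,4,6}" by (rule clos_inst[OF f _ nbhd_G4_3]) auto
  have c32: "h {3,4,5,7} = h {3,5,7}" by (rule clos_inst[OF f _ nbhd_G4_4]) auto
  have c33: "h {1,4,5} = h {1,4}" by (rule clos_inst[OF f _ nbhd_G4_5]) auto
  have c34: "h {1,3,6,7} = h {1,3,7}" by (rule clos_inst[OF f _ nbhd_G4_6]) auto
  have c35: "h {2,4,6,7} = h {2,4,6}" by (rule clos_inst[OF f _ nbhd_G4_7]) auto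
  show ?thesis unfolding V7 using e c0 c1 c2 c3 c4 c5 c6 c7 c8 c9 c10 c11 c12 c13 c14 c15 c16 c17 c18 c19 c20 c21 c22 c23 c24 c25 c26 c27 c28 c29 c30 c31 c32 c33 c34 c35 by linarith
qed

lemma ub_G5: assumes f: "shannon_feasible {1..7::nat} G5 h" shows "h {1..7} \<le> 7/2"
proof -
  have e: "h {} = 0" using f by (simp add: shannon_feasible_def)
  have c0: "h {1,2,3,4,5} + h {2,4,5} \<le> h {1,2,4,5} + h {2,3,4,5}" by (rule sub_inst[OF f]) auto
  have c1: "h {1,3,4,5,7} + h {4,5,7} \<le> h {1,4,5,7} + h {3,4,5,7}" by (rule sub_inst[OF f]) auto
  have c2: "h {1,4} + h {} \<le> h {1} + h {4}" by (rule sub_inst[OF f]) auto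
  have c3: "h {1,4,5} + h {5} \<le> h {1,5} + h {4,5}" by (rule sub_inst[OF f]) auto
  have c4: "h {1,5,7} + h {5} \<le> h {1,5} + h {5,7}" by (rule sub_inst[OF f]) auto
  have c5: "h {1,2,5,6,7} + h {2,5,6} \<le> h {1,2,5,6} + h {2,5,6,7}" by (rule sub_inst[OF f]) auto
  have c6: "h {1,2,3,4,5,7} + h {1,3,5,7} \<le> h {1,2,3,5,7} + h {1,3,4,5,7}" by (rule sub_inst[OF f]) auto
  have c7: "h {1,2,4,5,6,7} + h {1,5,6,7} \<le> h {1,2,5,6,7} + h {1,4,5,6,7}" by (rule sub_inst[OF f]) auto
  have c8: "h {2,5,6,7} + h {6,7} \<le> h {2,6,7} + h {5,6,7}" by (rule sub_inst[OF f]) auto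
  have c9: "h {1,2,3,5,7} + h {1,3,7} \<le> h {1,2,3,7} + h {1,3,5,7}" by (rule sub_inst[OF f]) auto
  have c10: "h {2,6} + h {} \<le> h {2} + h {6}" by (rule sub_inst[OF f]) auto
  have c11: "h {1,2,3,4,5,6,7} + h {1,3,4,5,7} \<le> h {1,2,3,4,5,7} + h {1,3,4,5,6,7}" by (rule sub_inst[OF f]) auto
  have c12: "h {3,5} + h {} \<le> h {3} + h {5}" by (rule sub_inst[OF f]) auto
  have c13: "h {2,3,4,5} + h {2,4} \<le> h {2,3,4} + h {2,4,5}" by (rule sub_inst[OF f]) auto
  have c14: "h {1,3,4,5,6,7} + h {1,4,5,7} \<le> h {1,3,4,5,7} + h {1,4,5,6,7}" by (rule sub_inst[OF f]) auto
  have c15: "h {1,2,3,4,5,6,7} + h {1,2,4,5,7} \<le> h {1,2,3,4,5,7} + h {1,2,4,5,6,7}" by (rule sub_inst[OF f]) auto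
  have c16: "h {3,4,5,7} + h {4,5} \<le> h {3,4,5} + h {4,5,7}" by (rule sub_inst[OF f]) auto
  have c17: "h {1,2,3,4,5,7} + h {1,2,4,5} \<le> h {1,2,3,4,5} + h {1,2,4,5,7}" by (rule sub_inst[OF f]) auto
  have c18: "h {1,4,5,6,7} + h {1,5,7} \<le> h {1,4,5,7} + h {1,5,6,7}" by (rule sub_inst[OF f]) auto
  have c19: "h {1,4,5,7} + h {1,5} \<le> h {1,4,5} + h {1,5,7}" by (rule sub_inst[OF f]) auto
  have c20: "h {5,6,7} + h {7} \<le> h {5,7} + h {6,7}" by (rule sub_inst[OF f]) auto
  have c21: "h {1,5,6,7} + h {1,7} \<le> h {1,5,7} + h {1,6,7}" by (rule sub_inst[OF f]) auto
  have c22: "h {5,7} + h {} \<le> h {5} + h {7}" by (rule sub_inst[OF f]) auto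
  have c23: "h {1} \<le> 1" by (rule sing_inst[OF f]) auto
  have c24: "h {2} \<le> 1" by (rule sing_inst[OF f]) auto
  have c25: "h {3} \<le> 1" by (rule sing_inst[OF f]) auto
  have c26: "h {4} \<le> 1" by (rule sing_inst[OF f]) auto
  have c27: "h {5} \<le> 1" by (rule sing_inst[OF f]) auto
  have c28: "h {6} \<le> 1" by (rule sing_inst[OF f]) auto
  have c29: "h {7} \<le> 1" by (rule sing_inst[OF f]) auto
  have c30: "h {1,2,5,6} = h {2,5,6}" by (rule clos_inst[OF f _ nbhd_G5_1]) auto
  have c31: "h {1,2,3,7} = h {1,3,7}" by (rule clos_inst[OF f _ nbhd_G5_2]) auto
  have c32: "h {2,3,4} = h {2,4}" by (rule clos_inst[OF f _ nbhd_G5_3]) auto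
  have c33: "h {3,4,5} = h {3,5}" by (rule clos_inst[OF f _ nbhd_G5_4]) auto
  have c34: "h {1,4,5} = h {1,4}" by (rule clos_inst[OF f _ nbhd_G5_5]) auto
  have c35: "h {1,6,7} = h {1,7}" by (rule clos_inst[OF f _ nbhd_G5_6]) auto
  have c36: "h {2,6,7} = h {2,6}" by (rule clos_inst[OF f _ nbhd_G5_7]) auto
  show ?thesis unfolding V7 using e c0 c1 c2 c3 c4 c5 c6 c7 c8 c9 c10 c11 c12 c13 c14 c15 c16 c17 c18 c19 c20 c21 c22 c23 c24 c25 c26 c27 c28 c29 c30 c31 c32 c33 c34 c35 c36 by linarith
qed

lemma ub_G6: assumes f: "shannon_feasible {1..7::nat} G6 h" shows "h {1..7} \<le> 7/2"
proof -
  have e: "h {} = 0" using f by (simp add: shannon_feasible_def)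
  have c0: "h {1,3,6,7} + h {6,7} \<le> h {1,6,7} + h {3,6,7}" by (rule sub_inst[OF f]) auto
  have c1: "h {1,2,3,4,7} + h {2,4,7} \<le> h {1,2,4,7} + h {2,3,4,7}" by (rule sub_inst[OF f]) auto
  have c2: "h {1,4,7} + h {7} \<le> h {1,7} + h {4,7}" by (rule sub_inst[OF f]) auto
  have c3: "h {1,3,4,5,6,7} + h {3,5,6,7} \<le> h {1,3,5,6,7} + h {3,4,5,6,7}" by (rule sub_inst[OF f]) auto
  have c4: "h {1,7} + h {} \<le> h {1} + h {7}" by (rule sub_inst[OF f]) auto
  have c5: "h {1,5,6,7} + h {5,6} \<le> h {1,5,6} + h {5,6,7}" by (rule sub_inst[OF f]) auto
  have c6: "h {1,2,4,6,7} + h {1,6,7} \<le> h {1,2,6,7} + h {1,4,6,7}" by (rule sub_inst[OF f]) auto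
  have c7: "h {1,2,3,4,5,6,7} + h {1,3,5,6,7} \<le> h {1,2,3,5,6,7} + h {1,3,4,5,6,7}" by (rule sub_inst[OF f]) auto
  have c8: "h {2,5,6} + h {6} \<le> h {2,6} + h {5,6}" by (rule sub_inst[OF f]) auto
  have c9: "h {1,2,3,4,5,6,7} + h {1,3,4,6,7} \<le> h {1,2,3,4,6,7} + h {1,3,4,5,6,7}" by (rule sub_inst[OF f]) auto
  have c10: "h {2,6} + h {} \<le> h {2} + h {6}" by (rule sub_inst[OF f]) auto
  have c11: "h {1,2,3,6,7} + h {1,3,7} \<le> h {1,2,3,7} + h {1,3,6,7}" by (rule sub_inst[OF f]) auto
  have c12: "h {1,2,3,7} + h {1,3} \<le> h {1,2,3} + h {1,3,7}" by (rule sub_inst[OF f]) auto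
  have c13: "h {1,2,5,6,7} + h {1,5,6} \<le> h {1,2,5,6} + h {1,5,6,7}" by (rule sub_inst[OF f]) auto
  have c14: "h {1,2,3,5,6,7} + h {1,2,6,7} \<le> h {1,2,3,6,7} + h {1,2,5,6,7}" by (rule sub_inst[OF f]) auto
  have c15: "h {1,3,4,5,6,7} + h {1,4,6,7} \<le> h {1,3,4,6,7} + h {1,4,5,6,7}" by (rule sub_inst[OF f]) auto
  have c16: "h {3,6} + h {} \<le> h {3} + h {6}" by (rule sub_inst[OF f]) auto
  have c17: "h {1,2,3,4,6,7} + h {1,2,4,7} \<le> h {1,2,3,4,7} + h {1,2,4,6,7}" by (rule sub_inst[OF f]) auto
  have c18: "h {1,4,5,6,7} + h {1,5,7} \<le> h {1,4,5,7} + h {1,5,6,7}" by (rule sub_inst[OF f]) auto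
  have c19: "h {3,4,5,6,7} + h {3,5,7} \<le> h {3,4,5,7} + h {3,5,6,7}" by (rule sub_inst[OF f]) auto
  have c20: "h {4,7} + h {} \<le> h {4} + h {7}" by (rule sub_inst[OF f]) auto
  have c21: "h {3,4,5,7} + h {3,5} \<le> h {3,4,5} + h {3,5,7}" by (rule sub_inst[OF f]) auto
  have c22: "h {5,6,7} + h {7} \<le> h {5,7} + h {6,7}" by (rule sub_inst[OF f]) auto
  have c23: "h {1,5,6,7} + h {1,7} \<le> h {1,5,7} + h {1,6,7}" by (rule sub_inst[OF f]) auto
  have c24: "h {5,7} + h {} \<le> h {5} + h {7}" by (rule sub_inst[OF f]) auto
  have c25: "h {1,4,5,7} + h {1,4} \<le> h {1,4,5} + h {1,4,7}" by (rule sub_inst[OF f]) auto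
  have c26: "h {1} \<le> 1" by (rule sing_inst[OF f]) auto
  have c27: "h {2} \<le> 1" by (rule sing_inst[OF f]) auto
  have c28: "h {3} \<le> 1" by (rule sing_inst[OF f]) auto
  have c29: "h {4} \<le> 1" by (rule sing_inst[OF f]) auto
  have c30: "h {5} \<le> 1" by (rule sing_inst[OF f]) auto
  have c31: "h {6} \<le> 1" by (rule sing_inst[OF f]) auto
  have c32: "h {7} \<le> 1" by (rule sing_inst[OF f]) auto
  have c33: "h {1,2,5,6} = h {2,5,6}" by (rule clos_inst[OF f _ nbhd_G6_1]) auto
  have c34: "h {1,2,3} = h {1,3}" by (rule clos_inst[OF f _ nbhd_G6_2]) auto
  have c35: "h {2,3,4,7} = h {2,4,7}" by (rule clos_inst[OF f _ nbhd_G6_3]) auto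
  have c36: "h {3,4,5} = h {3,5}" by (rule clos_inst[OF f _ nbhd_G6_4]) auto
  have c37: "h {1,4,5} = h {1,4}" by (rule clos_inst[OF f _ nbhd_G6_5]) auto
  have c38: "h {1,6,7} = h {1,7}" by (rule clos_inst[OF f _ nbhd_G6_6]) auto
  have c39: "h {3,6,7} = h {3,6}" by (rule clos_inst[OF f _ nbhd_G6_7]) auto
  show ?thesis unfolding V7 using e c0 c1 c2 c3 c4 c5 c6 c7 c8 c9 c10 c11 c12 c13 c14 c15 c16 c17 c18 c19 c20 c21 c22 c23 c24 c25 c26 c27 c28 c29 c30 c31 c32 c33 c34 c35 c36 c37 c38 c39 by linarith
qed
lemma ball7: "(\<forall>v\<in>{1..7::nat}. P v) \<longleftrightarrow> P 1 \<and> P 2 \<and> P 3 \<and> P 4 \<and> P 5 \<and> P 6 \<and> P 7"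
  unfolding V7 by simp

definition mc :: "nat set \<Rightarrow> nat \<Rightarrow> nat set \<Rightarrow> real" where
  "mc A k S = real (min k (card (S \<inter> A)))"

lemma mc_mono: "finite A \<Longrightarrow> S \<subseteq> T \<Longrightarrow> mc A k S \<le> mc A k T"
proof -
  assume "finite A" "S \<subseteq> T"
  then have "card (S \<inter> A) \<le> card (T \<inter> A)" by (intro card_mono) auto
  then show ?thesis unfolding mc_def by simp
qed

lemma mc_sub: "finite A \<Longrightarrow> mc A k (S \<union> T) + mc A k (S \<inter> T) \<le> mc A k S + mc A k T"
proof -
  assume fA: "finite A"
  have e1: "(S \<union> T) \<inter> A = (S \<inter> A) \<union> (T \<inter> A)" by auto
  have e2: "(S \<inter> T) \<inter> A = (S \<inter> A) \<inter> (T \<inter> A)" by auto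
  have c: "card ((S \<inter> A) \<union> (T \<inter> A)) + card ((S \<inter> A) \<inter> (T \<inter> A)) = card (S \<inter> A) + card (T \<inter> A)"
    using card_Un_Int[of "S \<inter> A" "T \<inter> A"] fA by simp
  have a1: "card ((S \<inter> A) \<inter> (T \<inter> A)) \<le> card (S \<inter> A)" using fA by (intro card_mono) auto
  have a2: "card ((S \<inter> A) \<inter> (T \<inter> A)) \<le> card (T \<inter> A)" using fA by (intro card_mono) auto
  have "min k (card ((S \<inter> A) \<union> (T \<inter> A))) + min k (card ((S \<inter> A) \<inter> (T \<inter> A)))
        \<le> min k (card (S \<inter> A)) + min k (card (T \<inter> A))"
    using c a1 a2 by linarith
  then have "real (min k (card ((S \<inter> A) \<union> (T \<inter> A)))) + real (min k (card ((S \<inter> A) \<inter> (T \<inter> A))))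
        \<le> real (min k (card (S \<inter> A))) + real (min k (card (T \<inter> A)))" by linarith
  then show ?thesis unfolding mc_def e1 e2 .
qed

definition hC :: "nat set \<Rightarrow> real" where
  "hC S = (1/2) * mc {1,2} 1 S + (1/2) * mc {2,3} 1 S + (1/2) * mc {3,4} 1 S + (1/2) * mc {4,5} 1 S
        + (1/2) * mc {1,5} 1 S + 1 * mc {6,7} 1 S"

definition hD :: "nat set \<Rightarrow> real" where
  "hD S = (2/3) * mc {1,5} 1 S + (2/3) * mc {2,3} 1 S + (1/3) * mc {3,4} 1 S + (1/3) * mc {4,5} 1 S
        + (2/3) * mc {6,7} 1 S + (1/3) * mc {1,2,6} 2 S + (1/3) * mc {4,7} 1 S"

lemma hC_mono: "S \<subseteq> T \<Longrightarrow> hC S \<le> hC T"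
  unfolding hC_def by (intro add_mono mult_left_mono mc_mono) auto
lemma hD_mono: "S \<subseteq> T \<Longrightarrow> hD S \<le> hD T"
  unfolding hD_def by (intro add_mono mult_left_mono mc_mono) auto

lemma hC_sub: "hC (S \<union> T) + hC (S \<inter> T) \<le> hC S + hC T"
  unfolding hC_def
  using mc_sub[of "{1,2}" 1 S T] mc_sub[of "{2,3}" 1 S T] mc_sub[of "{3,4}" 1 S T]
    mc_sub[of "{4,5}" 1 S T] mc_sub[of "{1,5}" 1 S T] mc_sub[of "{6,7}" 1 S T]
  by simp

lemma hD_sub: "hD (S \<union> T) + hD (S \<inter> T) \<le> hD S + hD T"
  unfolding hD_def
  using mc_sub[of "{1,5}" 1 S T] mc_sub[of "{2,3}" 1 S T] mc_sub[of "{3,4}" 1 S T]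
    mc_sub[of "{4,5}" 1 S T] mc_sub[of "{6,7}" 1 S T] mc_sub[of "{1,2,6}" 2 S T] mc_sub[of "{4,7}" 1 S T]
  by simp

lemma hC_V: "hC {1..7} = 7/2" unfolding V7 hC_def mc_def by simp
lemma hD_V: "hD {1..7} = 11/3" unfolding V7 hD_def mc_def by simp

lemma feas_G1: "shannon_feasible {1..7::nat} G1 hD"
  unfolding shannon_feasible_def
proof (intro conjI allI impI)
  show "hD {} = 0" unfolding hD_def mc_def by simp
  show "\<forall>v\<in>{1..7::nat}. hD {v} \<le> 1" unfolding V7 hD_def mc_def by simp
  show "hD S \<le> hD T" if "S \<subseteq> T \<and> T \<subseteq> {1..7::nat}" for S T using hD_mono that by blast
  show "hD (S \<union> T) + hD (S \<inter> T) \<le> hD S + hD T" for S T by (rule hD_sub)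
  show "\<forall>v\<in>{1..7::nat}. hD (insert v (nbhd {1..7} G1 v)) = hD (nbhd {1..7} G1 v)"
    unfolding ball7 nbhd_G1 by (simp add: hD_def mc_def)
qed

lemma feas_G2: "shannon_feasible {1..7::nat} G2 hC"
  unfolding shannon_feasible_def
proof (intro conjI allI impI)
  show "hC {} = 0" unfolding hC_def mc_def by simp
  show "\<forall>v\<in>{1..7::nat}. hC {v} \<le> 1" unfolding V7 hC_def mc_def by simp
  show "hC S \<le> hC T" if "S \<subseteq> T \<and> T \<subseteq> {1..7::nat}" for S T using hC_mono that by blast
  show "hC (S \<union> T) + hC (S \<inter> T) \<le> hC S + hC T" for S T by (rule hC_sub)
  show "\<forall>v\<in>{1..7::nat}. hC (insert v (nbhd {1..7} G2 v)) = hC (nbhd {1..7} G2 v)"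
    unfolding ball7 nbhd_G2 by (simp add: hC_def mc_def)
qed

lemma feas_G3: "shannon_feasible {1..7::nat} G3 hC"
  unfolding shannon_feasible_def
proof (intro conjI allI impI)
  show "hC {} = 0" unfolding hC_def mc_def by simp
  show "\<forall>v\<in>{1..7::nat}. hC {v} \<le> 1" unfolding V7 hC_def mc_def by simp
  show "hC S \<le> hC T" if "S \<subseteq> T \<and> T \<subseteq> {1..7::nat}" for S T using hC_mono that by blast
  show "hC (S \<union> T) + hC (S \<inter> T) \<le> hC S + hC T" for S T by (rule hC_sub)
  show "\<forall>v\<in>{1..7::nat}. hC (insert v (nbhd {1..7} G3 v)) = hC (nbhd {1..7} G3 v)"
    unfolding ball7 nbhd_G3 by (simp add: hC_def mc_def)
qed

lemma feas_G4: "shannon_feasible {1..7::nat} G4 hC"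
  unfolding shannon_feasible_def
proof (intro conjI allI impI)
  show "hC {} = 0" unfolding hC_def mc_def by simp
  show "\<forall>v\<in>{1..7::nat}. hC {v} \<le> 1" unfolding V7 hC_def mc_def by simp
  show "hC S \<le> hC T" if "S \<subseteq> T \<and> T \<subseteq> {1..7::nat}" for S T using hC_mono that by blast
  show "hC (S \<union> T) + hC (S \<inter> T) \<le> hC S + hC T" for S T by (rule hC_sub)
  show "\<forall>v\<in>{1..7::nat}. hC (insert v (nbhd {1..7} G4 v)) = hC (nbhd {1..7} G4 v)"
    unfolding ball7 nbhd_G4 by (simp add: hC_def mc_def)
qed

lemma feas_G5: "shannon_feasible {1..7::nat} G5 hC"
  unfolding shannon_feasible_def
proof (intro conjI allI impI)
  show "hC {} = 0" unfolding hC_def mc_def by simp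
  show "\<forall>v\<in>{1..7::nat}. hC {v} \<le> 1" unfolding V7 hC_def mc_def by simp
  show "hC S \<le> hC T" if "S \<subseteq> T \<and> T \<subseteq> {1..7::nat}" for S T using hC_mono that by blast
  show "hC (S \<union> T) + hC (S \<inter> T) \<le> hC S + hC T" for S T by (rule hC_sub)
  show "\<forall>v\<in>{1..7::nat}. hC (insert v (nbhd {1..7} G5 v)) = hC (nbhd {1..7} G5 v)"
    unfolding ball7 nbhd_G5 by (simp add: hC_def mc_def)
qed

lemma feas_G6: "shannon_feasible {1..7::nat} G6 hC"
  unfolding shannon_feasible_def
proof (intro conjI allI impI)
  show "hC {} = 0" unfolding hC_def mc_def by simp
  show "\<forall>v\<in>{1..7::nat}. hC {v} \<le> 1" unfolding V7 hC_def mc_def by simp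
  show "hC S \<le> hC T" if "S \<subseteq> T \<and> T \<subseteq> {1..7::nat}" for S T using hC_mono that by blast
  show "hC (S \<union> T) + hC (S \<inter> T) \<le> hC S + hC T" for S T by (rule hC_sub)
  show "\<forall>v\<in>{1..7::nat}. hC (insert v (nbhd {1..7} G6 v)) = hC (nbhd {1..7} G6 v)"
    unfolding ball7 nbhd_G6 by (simp add: hC_def mc_def)
qed

lemma ent: assumes f: "shannon_feasible {1..7::nat} G hh" and v: "hh {1..7} = b"
  and ub: "\<And>h. shannon_feasible {1..7::nat} G h \<Longrightarrow> h {1..7} \<le> b"
  shows "shannon_entropy {1..7::nat} G = b"
  unfolding shannon_entropy_def
proof (rule cSup_eq_maximum)
  show "b \<in> (\<lambda>h. h {1..7}) ` {h. shannon_feasible {1..7} G h}" using f v by force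
  show "x \<le> b" if "x \<in> (\<lambda>h. h {1..7}) ` {h. shannon_feasible {1..7} G h}" for x
    using that ub by blast
qed

theorem mainTheorem6:
  shows "shannon_entropy {1..7::nat} G1 = 11/3
       \<and> shannon_entropy {1..7::nat} G2 = 7/2
       \<and> shannon_entropy {1..7::nat} G3 = 7/2
       \<and> shannon_entropy {1..7::nat} G4 = 7/2
       \<and> shannon_entropy {1..7::nat} G5 = 7/2
       \<and> shannon_entropy {1..7::nat} G6 = 7/2"
proof (intro conjI)
  show "shannon_entropy {1..7::nat} G1 = 11/3"
    by (rule ent[where hh=hD and b="11/3", OF feas_G1 hD_V]) (rule ub_G1)
  show "shannon_entropy {1..7::nat} G2 = 7/2"
    by (rule ent[where hh=hC and b="7/2", OF feas_G2 hC_V]) (rule ub_G2)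
  show "shannon_entropy {1..7::nat} G3 = 7/2"
    by (rule ent[where hh=hC and b="7/2", OF feas_G3 hC_V]) (rule ub_G3)
  show "shannon_entropy {1..7::nat} G4 = 7/2"
    by (rule ent[where hh=hC and b="7/2", OF feas_G4 hC_V]) (rule ub_G4)
  show "shannon_entropy {1..7::nat} G5 = 7/2"
    by (rule ent[where hh=hC and b="7/2", OF feas_G5 hC_V]) (rule ub_G5)
  show "shannon_entropy {1..7::nat} G6 = 7/2"
    by (rule ent[where hh=hC and b="7/2", OF feas_G6 hC_V]) (rule ub_G6)
qed

end
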